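(* For $c\ge 2.1$ and $\mu\in[0,1/2]$ one has $d_{\mu,c}\le\frac{3-2\mu}{5}$. In particular $2|z|^2\le 3/5$ for all $(z,w)\in\Sigma_{\mu,c}$.
   Context: Restricted three-body problem with Jacobi Hamiltonian $H(q,p)=\tfrac12|p|^2+q_1p_2-q_2p_1-\frac{1-\mu}{|q+(\mu,0)|}-\frac{\mu}{|q-(1-\mu,0)|}$ and effective potential $U(q)=-\tfrac12|q|^2-\frac{1-\mu}{|q+(\mu,0)|}-\frac{\mu}{|q-(1-\mu,0)|}$; the Hill's region at level $-c$ is $\{q:U(q)\le -c\}$. $d_{\mu,c}$ denotes the maximal distance from $(-\mu,0)$ to a point of the connected component of the Hill's region whose closure contains $(-\mu,0)$ (this maximum is attained on the $q_1$-axis at a point $(x_{\mu,c},0)$ with $x_{\mu,c}\in(-\mu,1-\mu)$, $d_{\mu,c}=x_{\mu,c}+\mu$). Levi-Civita regularization: $q+\mu=2z^2$, $p=w/\bar z$ (complex notation); $\Sigma_{\mu,c}$ is the compact component of $K_{\mu,c}^{-1}(0)$ containing $\{z=0\}$, where $K_{\mu,c}=\tfrac12|w|^2+c|z|^2-\tfrac{1-\mu}{2}+2|z|^2(z_1w_2-z_2w_1)-\mu(z_1w_2+z_2w_1)-\frac{\mu|z|^2}{|2z^2-1|}$. *)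

theory Defs
  imports "HOL-Analysis.Analysis"
begin

text \<open>Positions q = (q1,q2) in the plane are represented as complex numbers q = q1 + i q2.
  The primaries sit at -mu and 1 - mu.\<close>

definition effU :: "real \<Rightarrow> complex \<Rightarrow> real" where
  "effU mu q = - ((cmod q)^2 / 2) - (1 - mu) / cmod (q + complex_of_real mu)
                 - mu / cmod (q - complex_of_real (1 - mu))"

text \<open>Hill's region at level -c (collision points, where U is -infinity / undefined, removed).\<close>
definition hill :: "real \<Rightarrow> real \<Rightarrow> complex set" where
  "hill mu c = {q. q \<noteq> complex_of_real (- mu)
                  \<and> (mu \<noteq> 0 \<longrightarrow> q \<noteq> complex_of_real (1 - mu))
                  \<and> effU mu q \<le> - c}"

definition hill_comp :: "real \<Rightarrow> real \<Rightarrow> complex set" where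
  "hill_comp mu c = {q \<in> hill mu c.
      complex_of_real (- mu) \<in> closure (connected_component_set (hill mu c) q)}"

definition dmc :: "real \<Rightarrow> real \<Rightarrow> real" where
  "dmc mu c = Sup ((\<lambda>q. dist (complex_of_real (- mu)) q) ` hill_comp mu c)"

text \<open>Levi-Civita regularized Hamiltonian K_{mu,c}(z,w), z = z1 + i z2, w = w1 + i w2.\<close>
definition Kreg :: "real \<Rightarrow> real \<Rightarrow> complex \<Rightarrow> complex \<Rightarrow> real" where
  "Kreg mu c z w = (cmod w)^2 / 2 + c * (cmod z)^2 - (1 - mu) / 2
     + 2 * (cmod z)^2 * (Re z * Im w - Im z * Re w)
     - mu * (Re z * Im w + Im z * Re w)
     - mu * (cmod z)^2 / cmod (2 * z^2 - 1)"

definition Kzero :: "real \<Rightarrow> real \<Rightarrow> (complex \<times> complex) set" where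
  "Kzero mu c = {(z, w). (mu \<noteq> 0 \<longrightarrow> 2 * z^2 \<noteq> 1) \<and> Kreg mu c z w = 0}"

definition Sigma_mc :: "real \<Rightarrow> real \<Rightarrow> (complex \<times> complex) set" where
  "Sigma_mc mu c = {p \<in> Kzero mu c. \<exists>w. (0, w) \<in> Kzero mu c
                       \<and> p \<in> connected_component_set (Kzero mu c) (0, w)}"

end

theory Submission
  imports Defs
begin

lemma polyG1:
  fixes m :: real assumes "0 \<le> m" "m \<le> 1/2"
  shows "0 < 76 - 306*m + 406*m^2 - 266*m^3 + 196*m^4"
proof -
  define t where "t = 1/2 - m"
  have t0: "0 \<le> t" "t \<le> 1/2" using assms t_def by auto
  have "126*t^3 \<le> 63 * t^2"
  proof -
    have "t^3 = t * t^2" by (simp add: power2_eq_square power3_eq_cube)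
    also have "\<dots> \<le> (1/2) * t^2" using t0 by (intro mult_right_mono) auto
    finally show ?thesis by simp
  qed
  moreover have "0 \<le> t^4" "0 \<le> t^2" "0 \<le> t" using t0 by auto
  ultimately have "0 < 7/2 + 3/2*t + 301*t^2 - 126*t^3 + 196*t^4" by linarith
  moreover have "7/2 + 3/2*t + 301*t^2 - 126*t^3 + 196*t^4 = 76 - 306*m + 406*m^2 - 266*m^3 + 196*m^4"
    unfolding t_def by (simp add: field_simps power2_eq_square power3_eq_cube power4_eq_xxxx)
  ultimately show ?thesis by simp
qed

lemma polyG2:
  fixes m :: real assumes "0 \<le> m" "m \<le> 1/2"
  shows "0 < 304 - 794*m + 564*m^2 + 126*m^3 - 36*m^4"
proof -
  define t where "t = 1/2 - m"
  have t0: "0 \<le> t" "t \<le> 1/2" using assms t_def by auto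
  have a: "54*t^3 \<le> 27 * t^2"
  proof -
    have "t^3 = t * t^2" by (simp add: power2_eq_square power3_eq_cube)
    also have "\<dots> \<le> (1/2) * t^2" using t0 by (intro mult_right_mono) auto
    finally show ?thesis by simp
  qed
  have b: "36*t^4 \<le> 9 * t^2"
  proof -
    have "t^4 = (t*t) * t^2" by (simp add: power2_eq_square power4_eq_xxxx)
    also have "\<dots> \<le> (1/4) * t^2" using t0 mult_mono[of t "1/2" t "1/2"] by (intro mult_right_mono) auto
    finally show ?thesis by simp
  qed
  have "0 \<le> t^2" "0 \<le> t" using t0 by auto
  with a b have "0 < 123/2 + 307/2*t + 699*t^2 - 54*t^3 - 36*t^4" by linarith
  moreover have "123/2 + 307/2*t + 699*t^2 - 54*t^3 - 36*t^4 = 304 - 794*m + 564*m^2 + 126*m^3 - 36*m^4"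
    unfolding t_def by (simp add: field_simps power2_eq_square power3_eq_cube power4_eq_xxxx)
  ultimately show ?thesis by simp
qed

lemma G1:
  fixes m :: real assumes "0 \<le> m" "m \<le> 1/2"
  defines "r \<equiv> (3 - 2*m)/5"
  shows "(r-m)^2/2 + (1-m)/r + m/(1-r) < 21/10"
proof -
  have p: "0 < 76 - 306*m + 406*m^2 - 266*m^3 + 196*m^4" by (rule polyG1[OF assms(1,2)])
  have d1: "0 < 3 - 2*m" "0 < 2 + 2*m" using assms by auto
  have e: "(r-m)^2/2 + (1-m)/r + m/(1-r) = ((3-7*m)^2*(3-2*m)*(2+2*m) + 250*(1-m)*(2+2*m) + 250*m*(3-2*m)) / (50*(3-2*m)*(2+2*m))"
    unfolding r_def using d1 by (simp add: field_simps)
  have "((3-7*m)^2*(3-2*m)*(2+2*m) + 250*(1-m)*(2+2*m) + 250*m*(3-2*m)) < 21/10 * (50*(3-2*m)*(2+2*m))"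
    using p by (simp add: algebra_simps power2_eq_square power3_eq_cube power4_eq_xxxx)
  then show ?thesis unfolding e using d1 by (simp add: divide_less_eq)
qed

lemma G2:
  fixes m :: real assumes "0 \<le> m" "m \<le> 1/2"
  defines "r \<equiv> (3 - 2*m)/5"
  shows "(r+m)^2/2 + (1-m)/r + m/(1+r) < 21/10"
proof -
  have p: "0 < 304 - 794*m + 564*m^2 + 126*m^3 - 36*m^4" by (rule polyG2[OF assms(1,2)])
  have d1: "0 < 3 - 2*m" "0 < 8 - 2*m" using assms by auto
  have e: "(r+m)^2/2 + (1-m)/r + m/(1+r) = ((3+3*m)^2*(3-2*m)*(8-2*m) + 250*(1-m)*(8-2*m) + 250*m*(3-2*m)) / (50*(3-2*m)*(8-2*m))"
    unfolding r_def using d1 by (simp add: field_simps)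
  have "((3+3*m)^2*(3-2*m)*(8-2*m) + 250*(1-m)*(8-2*m) + 250*m*(3-2*m)) < 21/10 * (50*(3-2*m)*(8-2*m))"
    using p by (simp add: algebra_simps power2_eq_square power3_eq_cube power4_eq_xxxx)
  then show ?thesis unfolding e using d1 by (simp add: divide_less_eq)
qed


lemma hconv:
  fixes lo a hi :: real assumes "0 < lo" "lo \<le> a" "a \<le> hi"
  shows "a^2/2 + 1/a \<le> max (lo^2/2 + 1/lo) (hi^2/2 + 1/hi)"
proof (rule ccontr)
  assume n: "\<not> ?thesis"
  have a0: "0 < a" "0 < hi" using assms by auto
  have id: "(hi-lo)*(a^2/2 + 1/a) - ((hi-a)*(lo^2/2 + 1/lo) + (a-lo)*(hi^2/2 + 1/hi))
      = (a-lo)*(a-hi)*(hi-lo)*(1/2 + 1/(a*lo*hi))"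
    using a0 assms(1) by (simp add: field_simps) (simp add: algebra_simps power2_eq_square)
  have "(a-lo)*(a-hi)*(hi-lo)*(1/2 + 1/(a*lo*hi)) \<le> 0"
    using assms a0 by (intro mult_nonpos_nonneg mult_nonpos_nonneg[OF mult_nonneg_nonpos]) auto
  moreover have "(hi-a)*(lo^2/2 + 1/lo) < (hi-a)*(a^2/2 + 1/a) \<or> hi = a"
    using n assms by (cases "hi = a") (auto intro: mult_strict_left_mono)
  moreover have "(a-lo)*(hi^2/2 + 1/hi) \<le> (a-lo)*(a^2/2 + 1/a)"
    using n assms by (intro mult_left_mono) auto
  moreover have "(hi-a)*(lo^2/2 + 1/lo) \<le> (hi-a)*(a^2/2 + 1/a)"
    using n assms by (intro mult_left_mono) auto
  moreover have "(a-lo)*(hi^2/2 + 1/hi) < (a-lo)*(a^2/2 + 1/a) \<or> lo = a"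
    using n assms by (cases "lo = a") (auto intro: mult_strict_left_mono)
  ultimately show False using id assms n
    by (smt (verit, best) distrib_right mult_cancel_right1 mult_eq_0_iff)
qed


lemma circle_bound:
  fixes m :: real and q :: complex
  assumes m: "0 \<le> m" "m \<le> 1/2" and qr: "cmod (q + complex_of_real m) = (3 - 2*m)/5"
  shows "(cmod q)^2/2 + (1-m)/((3 - 2*m)/5) + m / cmod (q - complex_of_real (1-m)) < 21/10"
proof -
  define r where "r = (3 - 2*m)/5"
  define a where "a = cmod (q - complex_of_real (1-m))"
  have r: "2/5 \<le> r" "r \<le> 3/5" using m r_def by auto
  have qr': "cmod (q + complex_of_real m) = r" using qr r_def by simp
  have eq: "q - complex_of_real (1-m) = (q + complex_of_real m) - 1" by simp
  have lo: "1 - r \<le> a"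
    using norm_triangle_ineq2[of 1 "q + complex_of_real m"] qr' unfolding a_def eq
    by (simp add: norm_minus_commute)
  have hi: "a \<le> 1 + r"
    using norm_triangle_ineq4[of "q + complex_of_real m" 1] qr' unfolding a_def eq by simp
  have r2: "r^2 = (Re q + m)^2 + (Im q)^2" using qr' cmod_power2[of "q + complex_of_real m"] by simp
  have a2: "a^2 = (Re q - 1 + m)^2 + (Im q)^2" unfolding a_def by (simp add: cmod_power2 algebra_simps)
  have q2: "(cmod q)^2 = m^2 + r^2 - m*(r^2+1) + m*a^2"
    unfolding cmod_power2 r2 a2 by (simp add: algebra_simps power2_eq_square)
  have a0: "0 < a" using lo r by linarith
  have h: "a^2/2 + 1/a \<le> max ((1-r)^2/2 + 1/(1-r)) ((1+r)^2/2 + 1/(1+r))"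
    using hconv[OF _ lo hi] r by auto
  have "(cmod q)^2/2 + (1-m)/r + m / a = (m^2 + r^2 - m*(r^2+1))/2 + (1-m)/r + m*(a^2/2 + 1/a)"
    unfolding q2 using a0 by (simp add: field_simps)
  also have "\<dots> \<le> (m^2 + r^2 - m*(r^2+1))/2 + (1-m)/r + m*max ((1-r)^2/2 + 1/(1-r)) ((1+r)^2/2 + 1/(1+r))"
    using h m by (intro add_left_mono mult_left_mono) auto
  also have "\<dots> < 21/10"
  proof -
    have nz: "1 + r \<noteq> 0" "r \<noteq> 0" "1 - r \<noteq> 0" using r by auto
    have "(m^2 + r^2 - m*(r^2+1))/2 + (1-m)/r + m*((1-r)^2/2 + 1/(1-r)) = (r-m)^2/2 + (1-m)/r + m/(1-r)"
    proof -
      have p: "(m^2 + r^2 - m*(r^2+1))/2 + m*(1-r)^2/2 = (r-m)^2/2" by (simp add: field_simps power2_eq_square)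
      have "m*((1-r)^2/2 + 1/(1-r)) = m*(1-r)^2/2 + m/(1-r)" by (simp add: distrib_left)
      then show ?thesis using p by linarith
    qed
    moreover have "(m^2 + r^2 - m*(r^2+1))/2 + (1-m)/r + m*((1+r)^2/2 + 1/(1+r)) = (r+m)^2/2 + (1-m)/r + m/(1+r)"
    proof -
      have p: "(m^2 + r^2 - m*(r^2+1))/2 + m*(1+r)^2/2 = (r+m)^2/2" by (simp add: field_simps power2_eq_square)
      have "m*((1+r)^2/2 + 1/(1+r)) = m*(1+r)^2/2 + m/(1+r)" by (simp add: distrib_left)
      then show ?thesis using p by linarith
    qed
    moreover note G1[OF m, folded r_def] G2[OF m, folded r_def]
    ultimately show ?thesis unfolding max_def by (cases "(1-r)^2/2 + 1/(1-r) \<le> (1+r)^2/2 + 1/(1+r)") (simp_all only: if_True if_False; linarith)+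
  qed
  finally show ?thesis unfolding r_def a_def .
qed


lemma sq_id:
  fixes z w :: complex and m :: real
  shows "(cmod (w + \<i> * cnj z * (2*z^2 - complex_of_real m)))^2
     = (cmod w)^2 + 2*(2*(cmod z)^2*(Re z * Im w - Im z * Re w) - m*(Re z * Im w + Im z * Re w))
       + (cmod z)^2 * (cmod (2*z^2 - complex_of_real m))^2"
  unfolding cmod_power2 by (simp add: power2_eq_square algebra_simps)

lemma Kid:
  fixes z w :: complex and m c :: real
  assumes "z \<noteq> 0"
  shows "Kreg m c z w = (cmod z)^2 * (c + effU m (2*z^2 - complex_of_real m))
           + (cmod (w + \<i> * cnj z * (2*z^2 - complex_of_real m)))^2/2"
proof -
  have n1: "cmod (2*z^2 - complex_of_real m + complex_of_real m) = 2*(cmod z)^2"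
    by (simp add: norm_mult norm_power)
  have n2: "2*z^2 - complex_of_real m - complex_of_real (1 - m) = 2*z^2 - 1" by simp
  have z0: "cmod z \<noteq> 0" using assms by simp
  show ?thesis unfolding Kreg_def effU_def sq_id n1 n2
    using z0 by (simp add: field_simps power2_eq_square)
qed


theorem lemma4p1:
  fixes mu c :: real
  assumes "c \<ge> 2.1" and "0 \<le> mu" and "mu \<le> 1/2"
  shows "dmc mu c \<le> (3 - 2 * mu) / 5
         \<and> (\<forall>z w. (z, w) \<in> Sigma_mc mu c \<longrightarrow> 2 * (cmod z)^2 \<le> 3 / 5)"
proof -
  note m = assms(2,3)
  define r where "r = (3 - 2 * mu) / 5"
  have r: "2/5 \<le> r" "r \<le> 3/5" using m r_def by auto
  have c0: "c > 0" using assms(1) by simp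
  have circ: "q \<notin> hill mu c" if "cmod (q + complex_of_real mu) = r" for q
  proof
    assume "q \<in> hill mu c"
    then have "effU mu q \<le> - c" unfolding hill_def by simp
    moreover have "(cmod q)^2/2 + (1-mu)/r + mu / cmod (q - complex_of_real (1-mu)) < 21/10"
      using circle_bound[OF m that[unfolded r_def], folded r_def] .
    moreover have "effU mu q = -((cmod q)^2/2 + (1-mu)/r + mu / cmod (q - complex_of_real (1-mu)))"
      unfolding effU_def that by simp
    ultimately show False using assms(1) by linarith
  qed
  have Kz: "2*z^2 - complex_of_real mu \<in> hill mu c" if "(z, w) \<in> Kzero mu c" "z \<noteq> 0" for z w
  proof -
    have K0: "Kreg mu c z w = 0" and n1: "mu \<noteq> 0 \<longrightarrow> 2 * z^2 \<noteq> 1"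
      using that(1) unfolding Kzero_def by auto
    have z2: "0 < (cmod z)^2" using that(2) by simp
    have "(cmod z)^2 * (c + effU mu (2*z^2 - complex_of_real mu)) \<le> 0"
      using Kid[OF that(2), of mu c w] K0 by (smt (verit) zero_le_power2 divide_nonneg_pos)
    then have "c + effU mu (2*z^2 - complex_of_real mu) \<le> 0"
      using z2 by (simp add: mult_le_0_iff)
    moreover have "2*z^2 - complex_of_real mu \<noteq> complex_of_real (- mu)" using that(2) by simp
    moreover have "mu \<noteq> 0 \<longrightarrow> 2*z^2 - complex_of_real mu \<noteq> complex_of_real (1 - mu)"
      using n1 by auto
    ultimately show ?thesis unfolding hill_def by simp
  qed
  have partB: "2 * (cmod z)^2 \<le> 3/5" if zs: "(z, w) \<in> Sigma_mc mu c" for z w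
  proof -
    obtain w0 where w0: "(0, w0) \<in> Kzero mu c"
      and zw: "(z, w) \<in> connected_component_set (Kzero mu c) (0, w0)"
      using zs unfolding Sigma_mc_def by blast
    define C where "C = connected_component_set (Kzero mu c) (0, w0)"
    define g where "g = (\<lambda>p::complex\<times>complex. 2 * (cmod (fst p))^2)"
    have gc: "continuous_on C g" unfolding g_def by (intro continuous_intros)
    have conn: "connected (g ` C)" using connected_continuous_image[OF gc] C_def by simp
    have "(0, w0) \<in> C" unfolding C_def using w0 by simp
    then have g0: "0 \<in> g ` C" unfolding g_def by force
    have gz: "g (z, w) \<in> g ` C" using zw C_def by blast
    show ?thesis
    proof (rule ccontr)
      assume "\<not> ?thesis"
      then have "r \<le> g (z, w)" using r unfolding g_def by simp
      then have "r \<in> g ` C" using connectedD_interval[OF conn g0 gz] r by simp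
      then obtain p where p: "p \<in> C" "g p = r" by blast
      obtain z1 w1 where pe: "p = (z1, w1)" by (cases p)
      have pK: "(z1, w1) \<in> Kzero mu c" using p pe C_def connected_component_subset by blast
      have "z1 \<noteq> 0" using p pe r unfolding g_def by auto
      then have "2*z1^2 - complex_of_real mu \<in> hill mu c" using Kz pK by blast
      moreover have "cmod (2*z1^2 - complex_of_real mu + complex_of_real mu) = r"
        using p pe unfolding g_def by (simp add: norm_mult norm_power)
      ultimately show False using circ by blast
    qed
  qed
  define f where "f = (\<lambda>x::complex. cmod (x + complex_of_real mu))"
  have fc: "continuous_on S f" for S unfolding f_def by (intro continuous_intros)
  have partA: "f q \<le> r" if "q \<in> hill_comp mu c" for q
  proof (rule ccontr)
    assume "\<not> ?thesis"
    then have fq: "r < f q" by simp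
    define K where "K = connected_component_set (hill mu c) q"
    have qK: "q \<in> K" using that unfolding K_def hill_comp_def by simp
    have conn: "connected (f ` K)" using connected_continuous_image[OF fc] K_def by simp
    have Ksub: "K \<subseteq> {x. r \<le> f x}"
    proof
      fix x assume xK: "x \<in> K"
      show "x \<in> {x. r \<le> f x}"
      proof (rule ccontr)
        assume "x \<notin> {x. r \<le> f x}"
        then have "f x \<le> r" by simp
        then have "r \<in> f ` K" using connectedD_interval[OF conn _ _ _ ] xK qK fq
          by (meson image_eqI less_imp_le)
        then obtain y where "y \<in> K" "f y = r" by blast
        moreover have "K \<subseteq> hill mu c" unfolding K_def by (rule connected_component_subset)
        ultimately show False using circ f_def by blast
      qed
    qed
    have cl: "closed {x. r \<le> f x}"
      using continuous_closed_preimage_constant fc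
      by (intro closed_Collect_le continuous_intros) (auto simp: f_def)
    have "closure K \<subseteq> {x. r \<le> f x}" by (rule closure_minimal[OF Ksub cl])
    moreover have "complex_of_real (- mu) \<in> closure K"
      using that unfolding K_def hill_comp_def by simp
    ultimately have "r \<le> f (complex_of_real (- mu))" by blast
    then show False using r unfolding f_def by simp
  qed
  define e where "e = (1 - mu) / c"
  have e: "0 < e" "e < 1" using m c0 assms(1) unfolding e_def by (auto simp: divide_simps)
  define D where "D = ball (complex_of_real (- mu)) e - {complex_of_real (- mu)}"
  have Dh: "D \<subseteq> hill mu c"
  proof
    fix x assume "x \<in> D"
    then have x: "x \<noteq> complex_of_real (- mu)" "dist (complex_of_real (- mu)) x < e"
      unfolding D_def by auto
    have dx: "dist (complex_of_real (- mu)) x = cmod (x + complex_of_real mu)"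
      by (simp add: dist_norm norm_minus_commute add.commute)
    have d0: "0 < cmod (x + complex_of_real mu)" using x(1)
      by (metis add_eq_0_iff2 neg_equal_iff_equal of_real_minus zero_less_norm_iff)
    have dl: "cmod (x + complex_of_real mu) < e" using x dx by simp
    have "c \<le> (1 - mu) / cmod (x + complex_of_real mu)"
      using dl d0 c0 unfolding e_def by (simp add: le_divide_eq pos_less_divide_eq mult.commute)
    moreover have "0 \<le> mu / cmod (x - complex_of_real (1 - mu))" using m by simp
    moreover have "0 \<le> (cmod x)^2/2" by simp
    ultimately have "effU mu x \<le> - c" unfolding effU_def by linarith
    moreover have "x \<noteq> complex_of_real (1 - mu)"
    proof
      assume "x = complex_of_real (1 - mu)"
      then have "cmod (x + complex_of_real mu) = 1" by simp
      then show False using dl e by simp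
    qed
    ultimately show "x \<in> hill mu c" unfolding hill_def using x(1) by simp
  qed
  define q0 where "q0 = complex_of_real (- mu + e/2)"
  have q0D: "q0 \<in> D" unfolding D_def q0_def using e by (simp add: dist_norm)
  have Dconn: "connected D" unfolding D_def by (rule connected_punctured_ball) simp
  have DK: "D \<subseteq> connected_component_set (hill mu c) q0"
    by (rule connected_component_maximal[OF q0D Dconn Dh])
  have clD: "complex_of_real (- mu) \<in> closure D"
    unfolding closure_approachable
  proof (intro allI impI)
    fix d :: real assume d: "0 < d"
    define y where "y = complex_of_real (- mu + min d e / 2)"
    have "y \<in> D" unfolding D_def y_def using d e by (simp add: dist_norm min_def)
    moreover have "dist y (complex_of_real (- mu)) < d" unfolding y_def using d e by (simp add: dist_norm)
    ultimately show "\<exists>y\<in>D. dist y (complex_of_real (- mu)) < d" by blast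
  qed
  have q0c: "q0 \<in> hill_comp mu c"
    unfolding hill_comp_def using Dh q0D closure_mono[OF DK] clD by blast
  have "dmc mu c \<le> r"
    unfolding dmc_def
  proof (rule cSup_least)
    show "(\<lambda>q. dist (complex_of_real (- mu)) q) ` hill_comp mu c \<noteq> {}" using q0c by blast
  next
    fix x assume "x \<in> (\<lambda>q. dist (complex_of_real (- mu)) q) ` hill_comp mu c"
    then obtain q where q: "q \<in> hill_comp mu c" "x = dist (complex_of_real (- mu)) q" by blast
    have "x = f q" unfolding q(2) f_def by (simp add: dist_norm norm_minus_commute add.commute)
    then show "x \<le> r" using partA[OF q(1)] by simp
  qed
  then show ?thesis using partB r_def by simp
qed

end
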